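(* Let $\mathbb{F}$ be an algebraically closed field with $\mathrm{char}\,\mathbb{F}=2$, and let $\mathcal{A}$ be a (not necessarily unital) subalgebra of $\mathbf{O}$ with $\mathcal{A}\not\subseteq\mathbf{O}_0$ and $\dim\mathcal{A}\ge2$. Then there exists $g\in{\rm G}_2$ such that one of the following holds: (a) $\{e_1,\mathbf{u}_1\}\subseteq g\mathcal{A}$; (b) $\{e_1,\mathbf{v}_1\}\subseteq g\mathcal{A}$; (c) $\{e_1,e_2\}\subseteq g\mathcal{A}$.
   Context: The split octonion algebra $\mathbf{O}$ is the 8-dimensional $\mathbb{F}$-vector space of formal matrices $a=\begin{pmatrix}\alpha&\mathbf{u}\\ \mathbf{v}&\beta\end{pmatrix}$ with $\alpha,\beta\in\mathbb{F}$, $\mathbf{u},\mathbf{v}\in\mathbb{F}^3$, with multiplication $\begin{pmatrix}\alpha&\mathbf{u}\\ \mathbf{v}&\beta\end{pmatrix}\begin{pmatrix}\alpha'&\mathbf{u}'\\ \mathbf{v}'&\beta'\end{pmatrix}=\begin{pmatrix}\alpha\alpha'+\mathbf{u}\cdot\mathbf{v}'&\alpha\mathbf{u}'+\beta'\mathbf{u}-\mathbf{v}\times\mathbf{v}'\\ \alpha'\mathbf{v}+\beta\mathbf{v}'+\mathbf{u}\times\mathbf{u}'&\beta\beta'+\mathbf{v}\cdot\mathbf{u}'\end{pmatrix}$ (dot product and cross product on $\mathbb{F}^3$). Trace $\mathrm{tr}(a)=\alpha+\beta$, $\mathbf{O}_0=\{a\in\mathbf{O}\mid\mathrm{tr}(a)=0\}$.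 With $\mathbf{c}_1$ the first standard basis vector of $\mathbb{F}^3$: $e_1$ has $\alpha=1$ and all else $0$, $e_2$ has $\beta=1$ and all else $0$, $\mathbf{u}_1$ has $\mathbf{u}=\mathbf{c}_1$ and all else $0$, $\mathbf{v}_1$ has $\mathbf{v}=\mathbf{c}_1$ and all else $0$. ${\rm G}_2=\mathrm{Aut}(\mathbf{O})$. *)

theory Defs
  imports Main "HOL-Library.Product_Plus" "HOL-Computational_Algebra.Polynomial"
begin

text \<open>Vectors in F^3 as triples; an octonion (alpha, u, v, beta) is the formal
matrix with diagonal alpha, beta and off-diagonal vectors u (top right), v (bottom left).\<close>

type_synonym 'a vec3 = "'a \<times> 'a \<times> 'a"
type_synonym 'a oct = "'a \<times> 'a vec3 \<times> 'a vec3 \<times> 'a"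

fun vsc :: "'a::field \<Rightarrow> 'a vec3 \<Rightarrow> 'a vec3" where
  "vsc c (x1, x2, x3) = (c * x1, c * x2, c * x3)"

fun dot3 :: "'a::field vec3 \<Rightarrow> 'a vec3 \<Rightarrow> 'a" where
  "dot3 (x1, x2, x3) (y1, y2, y3) = x1 * y1 + x2 * y2 + x3 * y3"

fun cross3 :: "'a::field vec3 \<Rightarrow> 'a vec3 \<Rightarrow> 'a vec3" where
  "cross3 (x1, x2, x3) (y1, y2, y3) =
     (x2 * y3 - x3 * y2, x3 * y1 - x1 * y3, x1 * y2 - x2 * y1)"

fun oct_scale :: "'a::field \<Rightarrow> 'a oct \<Rightarrow> 'a oct" where
  "oct_scale c (a, u, v, b) = (c * a, vsc c u, vsc c v, c * b)"

fun oct_mult :: "'a::field oct \<Rightarrow> 'a oct \<Rightarrow> 'a oct" where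
  "oct_mult (a, u, v, b) (a', u', v', b') =
     (a * a' + dot3 u v',
      vsc a u' + vsc b' u - cross3 v v',
      vsc a' v + vsc b v' + cross3 u u',
      b * b' + dot3 v u')"

fun oct_tr :: "'a::field oct \<Rightarrow> 'a" where
  "oct_tr (a, u, v, b) = a + b"

definition c1 :: "'a::field vec3" where "c1 = (1, 0, 0)"

definition e1 :: "'a::field oct" where "e1 = (1, 0, 0, 0)"
definition e2 :: "'a::field oct" where "e2 = (0, 0, 0, 1)"
definition u1 :: "'a::field oct" where "u1 = (0, c1, 0, 0)"
definition v1 :: "'a::field oct" where "v1 = (0, 0, c1, 0)"

lemma vsc_simps:
  "vsc a (x + y) = vsc a x + vsc a y"
  "vsc (a + b) x = vsc a x + vsc b x"
  "vsc a (vsc b x) = vsc (a * b) x"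
  "vsc 1 x = x"
  by (cases x; cases y; simp add: algebra_simps)+

global_interpretation oct: vector_space "oct_scale :: 'a::field \<Rightarrow> 'a oct \<Rightarrow> 'a oct"
  by unfold_locales (auto simp: algebra_simps vsc_simps)

definition oct0 :: "'a::field oct set" where
  "oct0 = {a. oct_tr a = 0}"

definition oct_subalgebra :: "'a::field oct set \<Rightarrow> bool" where
  "oct_subalgebra A \<longleftrightarrow> oct.subspace A \<and> (\<forall>x\<in>A. \<forall>y\<in>A. oct_mult x y \<in> A)"

definition G2 :: "('a::field oct \<Rightarrow> 'a oct) set" where
  "G2 = {g. bij g \<and> Vector_Spaces.linear oct_scale oct_scale g
            \<and> (\<forall>x y. g (oct_mult x y) = oct_mult (g x) (g y))}"

definition alg_closed_field :: "'a::field itself \<Rightarrow> bool" where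
  "alg_closed_field _ \<longleftrightarrow> (\<forall>p :: 'a poly. degree p > 0 \<longrightarrow> (\<exists>x. poly p x = 0))"

end

theory Submission
  imports Defs
begin


lemma zero_vec3: "(0::'a::field vec3) = (0,0,0)" by (simp add: zero_prod_def)
lemma zero_oct: "(0::'a::field oct) = (0,(0,0,0),(0,0,0),0)" by (simp add: zero_prod_def)

lemma vec_basic[simp]:
  fixes x :: "'a::field vec3"
  shows "dot3 0 x = 0" "dot3 x 0 = 0" "cross3 0 x = 0" "cross3 x 0 = 0"
    "vsc c 0 = 0" "vsc 0 x = 0" "cross3 x x = 0"
  by (cases x; simp add: zero_vec3)+

fun phi :: "'a::field vec3 \<Rightarrow> 'a oct \<Rightarrow> 'a oct" where
  "phi p (a, u, v, b) = (a - dot3 p v, u + vsc (a - b) p - vsc (dot3 p v) p, v + cross3 p u, b + dot3 p v)"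

fun psi :: "'a::field vec3 \<Rightarrow> 'a oct \<Rightarrow> 'a oct" where
  "psi q (a, u, v, b) = (a - dot3 q u, u + cross3 q v, v + vsc (a - b) q - vsc (dot3 q u) q, b + dot3 q u)"

fun sig :: "'a::field oct \<Rightarrow> 'a oct" where
  "sig (a, u, v, b) = (b, - v, - u, a)"

fun mv :: "'a::field vec3 \<times> 'a vec3 \<times> 'a vec3 \<Rightarrow> 'a vec3 \<Rightarrow> 'a vec3" where
  "mv (r1, r2, r3) x = (dot3 r1 x, dot3 r2 x, dot3 r3 x)"
fun cofm :: "'a::field vec3 \<times> 'a vec3 \<times> 'a vec3 \<Rightarrow> 'a vec3 \<times> 'a vec3 \<times> 'a vec3" where
  "cofm (r1, r2, r3) = (cross3 r2 r3, cross3 r3 r1, cross3 r1 r2)"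
fun trm :: "'a::field vec3 \<times> 'a vec3 \<times> 'a vec3 \<Rightarrow> 'a vec3 \<times> 'a vec3 \<times> 'a vec3" where
  "trm ((a,b,c),(d,e,f),(g,h,i)) = ((a,d,g),(b,e,h),(c,f,i))"
fun det3 :: "'a::field vec3 \<times> 'a vec3 \<times> 'a vec3 \<Rightarrow> 'a" where
  "det3 (r1, r2, r3) = dot3 r1 (cross3 r2 r3)"
fun slm :: "'a::field vec3 \<times> 'a vec3 \<times> 'a vec3 \<Rightarrow> 'a oct \<Rightarrow> 'a oct" where
  "slm M (a, u, v, b) = (a, mv M u, mv (cofm M) v, b)"
fun slminv :: "'a::field vec3 \<times> 'a vec3 \<times> 'a vec3 \<Rightarrow> 'a oct \<Rightarrow> 'a oct" where
  "slminv M (a, u, v, b) = (a, mv (trm (cofm M)) u, mv (trm M) v, b)"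

lemma oct_cases: obtains a u1 u2 u3 v1 v2 v3 b where "x = (a,(u1,u2,u3),(v1,v2,v3),b)"
  by (metis prod.exhaust)
lemma mat_cases: obtains a b c d e f g h i where "(M::'a vec3 \<times> 'a vec3 \<times> 'a vec3) = ((a,b,c),(d,e,f),(g,h,i))"
  by (metis prod.exhaust)

lemma phi_mult: "phi p (oct_mult x y) = oct_mult (phi p x) (phi p y)"
  by (cases x rule: oct_cases; cases y rule: oct_cases; cases p; simp add: algebra_simps)
lemma psi_mult: "psi p (oct_mult x y) = oct_mult (psi p x) (psi p y)"
  by (cases x rule: oct_cases; cases y rule: oct_cases; cases p; simp add: algebra_simps)
lemma sig_mult: "sig (oct_mult x y) = oct_mult (sig x) (sig y)"
  by (cases x rule: oct_cases; cases y rule: oct_cases; simp add: algebra_simps)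
lemma phi_inv: "phi (-p) (phi p x) = x"
  by (cases x rule: oct_cases; cases p; simp add: algebra_simps)
lemma psi_inv: "psi (-p) (psi p x) = x"
  by (cases x rule: oct_cases; cases p; simp add: algebra_simps)
lemma sig_inv: "sig (sig x) = x"
  by (cases x rule: oct_cases; simp)

lemma mv_id1: "dot3 (mv M u) (mv (cofm M) v) = det3 M * dot3 u v"
  by (cases M rule: mat_cases; cases u; cases v; simp add: algebra_simps)
lemma mv_id2: "dot3 (mv (cofm M) v) (mv M u) = det3 M * dot3 v u"
  by (cases M rule: mat_cases; cases u; cases v; simp add: algebra_simps)
lemma mv_id3: "cross3 (mv M u) (mv M v) = mv (cofm M) (cross3 u v)"
  by (cases M rule: mat_cases; cases u; cases v; simp add: algebra_simps)
lemma mv_id4: "cross3 (mv (cofm M) u) (mv (cofm M) v) = vsc (det3 M) (mv M (cross3 u v))"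
  by (cases M rule: mat_cases; cases u; cases v; simp add: algebra_simps)
lemma mv_lin: "mv M (x + y) = mv M x + mv M y" "mv M (x - y) = mv M x - mv M y"
  "mv M (vsc c x) = vsc c (mv M x)"
  by (cases M rule: mat_cases; cases x; cases y; simp add: algebra_simps)+
lemma mv_inv1: "mv (trm (cofm M)) (mv M u) = vsc (det3 M) u"
  by (cases M rule: mat_cases; cases u; simp add: algebra_simps)
lemma mv_inv2: "mv M (mv (trm (cofm M)) u) = vsc (det3 M) u"
  by (cases M rule: mat_cases; cases u; simp add: algebra_simps)
lemma mv_inv3: "mv (trm M) (mv (cofm M) u) = vsc (det3 M) u"
  by (cases M rule: mat_cases; cases u; simp add: algebra_simps)
lemma mv_inv4: "mv (cofm M) (mv (trm M) u) = vsc (det3 M) u"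
  by (cases M rule: mat_cases; cases u; simp add: algebra_simps)



lemma G2I:
  fixes g :: "'a::field oct \<Rightarrow> 'a oct"
  assumes "\<And>x. h (g x) = x" "\<And>x. g (h x) = x" "\<And>x y. g (x + y) = g x + g y"
    "\<And>c x. g (oct_scale c x) = oct_scale c (g x)" "\<And>x y. g (oct_mult x y) = oct_mult (g x) (g y)"
  shows "g \<in> G2"
proof -
  have "bij g" by (metis assms(1,2) bijI injI surjI)
  moreover have "Vector_Spaces.linear oct_scale oct_scale g"
    using assms(3,4) by (simp add: Vector_Spaces.linear_iff oct.vector_space_axioms)
  ultimately show ?thesis using assms(5) unfolding G2_def by blast
qed


lemma G2_comp: "g \<in> G2 \<Longrightarrow> h \<in> G2 \<Longrightarrow> h \<circ> g \<in> G2"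
  unfolding G2_def using bij_comp Vector_Spaces.linear_compose[of oct_scale oct_scale g oct_scale h]
  by (simp only: mem_Collect_eq o_apply) blast

lemma G2_linear: "g \<in> G2 \<Longrightarrow> Vector_Spaces.linear oct_scale oct_scale g"
  unfolding G2_def by blast
lemma G2_scale: "g \<in> G2 \<Longrightarrow> g (oct_scale c x) = oct_scale c (g x)"
  using G2_linear unfolding Vector_Spaces.linear_iff by blast
lemma G2_mult: "g \<in> G2 \<Longrightarrow> g (oct_mult x y) = oct_mult (g x) (g y)"
  unfolding G2_def by blast
lemma G2_inj: "g \<in> G2 \<Longrightarrow> inj g"
  unfolding G2_def using bij_is_inj by blast

lemma G2_subalg: assumes "g \<in> G2" "oct_subalgebra A" shows "oct_subalgebra (g ` A)"
proof -
  have "oct.subspace (g ` A)"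
    using module_hom.subspace_image[OF module_hom_linearI[OF G2_linear[OF assms(1)]]] assms(2)
    unfolding oct_subalgebra_def by blast
  moreover have "\<forall>x\<in>g ` A. \<forall>y\<in>g ` A. oct_mult x y \<in> g ` A"
  proof (intro ballI)
    fix x y assume "x \<in> g ` A" "y \<in> g ` A"
    then obtain a b where "a \<in> A" "b \<in> A" "x = g a" "y = g b" by blast
    then have "oct_mult x y = g (oct_mult a b)" using G2_mult[OF assms(1)] by simp
    moreover have "oct_mult a b \<in> A" using assms(2) \<open>a \<in> A\<close> \<open>b \<in> A\<close> unfolding oct_subalgebra_def by blast
    ultimately show "oct_mult x y \<in> g ` A" by blast
  qed
  ultimately show ?thesis unfolding oct_subalgebra_def by blast
qed


lemma phi_add: "phi p (x + y) = phi p x + phi p y"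
  by (cases x rule: oct_cases; cases y rule: oct_cases; cases p; simp add: algebra_simps)
lemma phi_sc: "phi p (oct_scale c x) = oct_scale c (phi p x)"
  by (cases x rule: oct_cases; cases p; simp add: algebra_simps)
lemma psi_add: "psi p (x + y) = psi p x + psi p y"
  by (cases x rule: oct_cases; cases y rule: oct_cases; cases p; simp add: algebra_simps)
lemma psi_sc: "psi p (oct_scale c x) = oct_scale c (psi p x)"
  by (cases x rule: oct_cases; cases p; simp add: algebra_simps)
lemma sig_add: "sig (x + y) = sig x + sig y"
  by (cases x rule: oct_cases; cases y rule: oct_cases; simp add: algebra_simps)
lemma sig_sc: "sig (oct_scale c x) = oct_scale c (sig x)"
  by (cases x rule: oct_cases; simp add: algebra_simps)

lemma phi_G2: "phi p \<in> G2"
proof (rule G2I[where h="phi (-p)"])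
  show "phi (-p) (phi p x) = x" for x by (rule phi_inv)
  show "phi p (phi (-p) x) = x" for x using phi_inv[of "-p" x] by simp
qed (rule phi_add phi_sc phi_mult)+

lemma psi_G2: "psi p \<in> G2"
proof (rule G2I[where h="psi (-p)"])
  show "psi (-p) (psi p x) = x" for x by (rule psi_inv)
  show "psi p (psi (-p) x) = x" for x using psi_inv[of "-p" x] by simp
qed (rule psi_add psi_sc psi_mult)+

lemma sig_G2: "sig \<in> G2"
  by (rule G2I[where h="sig"]) (rule sig_inv sig_add sig_sc sig_mult)+

lemma slm_add: "slm M (x + y) = slm M x + slm M y"
  by (cases x; cases y; simp add: mv_lin)
lemma slm_sc: "slm M (oct_scale c x) = oct_scale c (slm M x)"
  by (cases x; simp add: mv_lin)
lemma mv_cofcof: "mv (cofm (cofm M)) x = vsc (det3 M) (mv M x)"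
  by (cases M rule: mat_cases; cases x; simp add: algebra_simps)

lemma slm_mult: assumes "det3 M = 1" shows "slm M (oct_mult x y) = oct_mult (slm M x) (slm M y)"
  by (cases x; cases y; simp add: mv_lin mv_id1 mv_id2 mv_id3 mv_cofcof assms vsc_simps)
lemma slm_inv1: assumes "det3 M = 1" shows "slminv M (slm M x) = x"
  by (cases x; simp add: mv_inv1 mv_inv3 assms vsc_simps)
lemma slm_inv2: assumes "det3 M = 1" shows "slm M (slminv M x) = x"
  by (cases x; simp add: mv_inv2 mv_inv4 assms vsc_simps)

lemma slm_G2: assumes "det3 M = 1" shows "slm M \<in> G2"
  by (rule G2I[where h="slminv M"]) (rule slm_inv1[OF assms] slm_inv2[OF assms] slm_add slm_sc slm_mult[OF assms])+




lemma exM_u: assumes "(u::'a::field vec3) \<noteq> 0" shows "\<exists>M. det3 M = 1 \<and> mv M u = c1"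
proof -
  obtain x y z where u: "u = (x,y,z)" by (cases u) auto
  show ?thesis
  proof (cases "x = 0")
    case False
    show ?thesis
      by (rule exI[of _ "((1/x,0,0),(-y,x,0),(-z/x,0,1))"]) (use False in \<open>simp add: u c1_def field_simps\<close>)
  next
    case x: True
    show ?thesis
    proof (cases "y = 0")
      case False
      show ?thesis
        by (rule exI[of _ "((0,1/y,0),(-y,0,0),(0,-z/y,1))"]) (use False x in \<open>simp add: u c1_def field_simps\<close>)
    next
      case True
      with x assms u have "z \<noteq> 0" by (simp add: zero_vec3)
      show ?thesis
        by (rule exI[of _ "((0,0,1/z),(0,1,0),(-z,0,0))"]) (use \<open>z \<noteq> 0\<close> x True in \<open>simp add: u c1_def field_simps\<close>)
    qed
  qed
qed

lemma exM_v: assumes "(u::'a::field vec3) \<noteq> 0" shows "\<exists>M. det3 M = 1 \<and> mv (cofm M) u = c1"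
proof -
  obtain x y z where u: "u = (x,y,z)" by (cases u) auto
  show ?thesis
  proof (cases "x = 0")
    case False
    show ?thesis
      by (rule exI[of _ "((x,y,z),(0,1/x,0),(0,0,1))"]) (use False in \<open>simp add: u c1_def field_simps\<close>)
  next
    case x: True
    show ?thesis
    proof (cases "y = 0")
      case False
      show ?thesis
        by (rule exI[of _ "((x,y,z),(-1/y,0,0),(0,0,1))"]) (use False x in \<open>simp add: u c1_def field_simps\<close>)
    next
      case True
      with x assms u have "z \<noteq> 0" by (simp add: zero_vec3)
      show ?thesis
        by (rule exI[of _ "((x,y,z),(0,1,0),(-1/z,0,0))"]) (use \<open>z \<noteq> 0\<close> x True in \<open>simp add: u c1_def field_simps\<close>)
    qed
  qed
qed

lemma mv_zero[simp]: "mv M 0 = 0"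
  by (cases M rule: mat_cases; simp add: zero_vec3)

lemma peirce:
  fixes B :: "'a::field oct set"
  assumes B: "oct_subalgebra B" and e: "e1 \<in> B" and w: "w \<in> B" and nw: "\<forall>c. w \<noteq> oct_scale c e1"
  shows "\<exists>h\<in>G2. {e1, u1} \<subseteq> h ` B \<or> {e1, v1} \<subseteq> h ` B \<or> {e1, e2} \<subseteq> h ` B"
proof -
  obtain a u v b where wd: "w = (a, u, v, b)" by (cases w) auto
  have sub: "oct.subspace B" and mul: "\<And>x y. x \<in> B \<Longrightarrow> y \<in> B \<Longrightarrow> oct_mult x y \<in> B"
    using B unfolding oct_subalgebra_def by auto
  have ew: "oct_mult e1 w = (a, u, 0, 0)" by (simp add: wd e1_def vsc_simps)
  have we: "oct_mult w e1 = (a, 0, v, 0)" by (simp add: wd e1_def vsc_simps)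
  have ewe: "oct_mult (oct_mult e1 w) e1 = (a, 0, 0, 0)" unfolding ew by (simp add: e1_def vsc_simps)
  have ewB: "(a, u, 0, 0) \<in> B" using mul[OF e w] ew by simp
  have weB: "(a, 0, v, 0) \<in> B" using mul[OF w e] we by simp
  have eweB: "(a, 0, 0, 0) \<in> B" using mul[OF mul[OF e w] e] ewe by simp
  have "(a, u, 0, 0) - (a, 0, 0, 0) = ((0, u, 0, 0)::'a oct)" by (simp add: zero_prod_def)
  then have UB: "(0, u, 0, 0) \<in> B" using oct.subspace_diff[OF sub ewB eweB] by metis
  have "(a, 0, v, 0) - (a, 0, 0, 0) = ((0, 0, v, 0)::'a oct)" by (simp add: zero_prod_def)
  then have VB: "(0, 0, v, 0) \<in> B" using oct.subspace_diff[OF sub weB eweB] by metis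
  have "w - (a, u, 0, 0) - (a, 0, v, 0) + (a, 0, 0, 0) = ((0, 0, 0, b)::'a oct)" by (simp add: wd zero_prod_def)
  then have EB: "(0, 0, 0, b) \<in> B"
    using oct.subspace_add[OF sub oct.subspace_diff[OF sub oct.subspace_diff[OF sub w ewB] weB] eweB]
    by metis
  have "u \<noteq> 0 \<or> v \<noteq> 0 \<or> b \<noteq> 0"
  proof (rule ccontr)
    assume "\<not> ?thesis"
    then have "w = oct_scale a e1" by (simp add: wd e1_def)
    with nw show False by blast
  qed
  moreover
  { assume "b \<noteq> 0"
    have "oct_scale (1/b) (0, 0, 0, b) \<in> B" by (rule oct.subspace_scale[OF sub EB])
    then have "e2 \<in> B" using \<open>b \<noteq> 0\<close> by (simp add: e2_def)
    moreover have "id \<in> G2" by (rule G2I[where h=id]) auto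
    ultimately have ?thesis using e by (intro bexI[of _ id]) auto }
  moreover
  { assume "u \<noteq> 0"
    then obtain M where M: "det3 M = 1" "mv M u = c1" using exM_u by blast
    have "slm M e1 = e1" by (simp add: e1_def)
    moreover have "slm M (0, u, 0, 0) = u1" by (simp add: M u1_def)
    ultimately have "{e1, u1} \<subseteq> slm M ` B" using e UB by (metis empty_subsetI image_eqI insert_subset)
    then have ?thesis using slm_G2[OF M(1)] by blast }
  moreover
  { assume "v \<noteq> 0"
    then obtain M where M: "det3 M = 1" "mv (cofm M) v = c1" using exM_v by blast
    have "slm M e1 = e1" by (simp add: e1_def)
    moreover have "slm M (0, 0, v, 0) = v1" by (simp add: M v1_def)
    ultimately have "{e1, v1} \<subseteq> slm M ` B" using e VB by (metis empty_subsetI image_eqI insert_subset)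
    then have ?thesis using slm_G2[OF M(1)] by blast }
  ultimately show ?thesis by blast
qed


lemma phi_special: "phi (vsc t u) (a, u, v, b) =
   (a - t * dot3 u v, vsc (1 + (a - b) * t - t * t * dot3 u v) u, v, b + t * dot3 u v)"
  by (cases u; cases v; simp add: algebra_simps)

lemma psi_special: "psi (-v) (a, 0, v, b) = (a, 0, v - vsc (a - b) v, b)"
  by (cases v; simp add: algebra_simps zero_vec3)

lemma finish:
  fixes A :: "'a::field oct set"
  assumes G: "G \<in> G2" and Gy: "G y = e1" and yA: "y \<in> A" and A: "oct_subalgebra A"
    and d: "oct.dim A \<ge> 2"
  shows "\<exists>g\<in>G2. {e1, u1} \<subseteq> g ` A \<or> {e1, v1} \<subseteq> g ` A \<or> {e1, e2} \<subseteq> g ` A"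
proof -
  have B: "oct_subalgebra (G ` A)" by (rule G2_subalg[OF G A])
  have eB: "e1 \<in> G ` A" unfolding Gy[symmetric] by (rule imageI[OF yA])
  have "\<exists>w\<in>G ` A. \<forall>c. w \<noteq> oct_scale c e1"
  proof (rule ccontr)
    assume "\<not> ?thesis"
    then have all: "\<And>w. w \<in> G ` A \<Longrightarrow> \<exists>c. w = oct_scale c e1" by blast
    have "A \<subseteq> oct.span {y}"
    proof
      fix x assume "x \<in> A"
      then obtain c where "G x = oct_scale c e1" using all by blast
      also have "\<dots> = G (oct_scale c y)" using G2_scale[OF G] Gy by simp
      finally have "x = oct_scale c y" using G2_inj[OF G] by (simp add: inj_eq)
      then show "x \<in> oct.span {y}" by (simp add: oct.span_base oct.span_scale)
    qed
    then have "oct.dim A \<le> card {y}" by (intro oct.dim_le_card) auto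
    with d show False by simp
  qed
  then obtain w where w: "w \<in> G ` A" "\<forall>c. w \<noteq> oct_scale c e1" by blast
  from peirce[OF B eB w] obtain h where h: "h \<in> G2"
    "{e1, u1} \<subseteq> h ` G ` A \<or> {e1, v1} \<subseteq> h ` G ` A \<or> {e1, e2} \<subseteq> h ` G ` A" by blast
  show ?thesis
    by (rule bexI[of _ "h \<circ> G"]) (use h G2_comp[OF G h(1)] in \<open>simp_all add: image_comp\<close>)
qed

lemma char2_neg: assumes "CHAR('a::field) = 2" shows "-(z::'a) = z"
proof -
  have "(2::'a) = 0" using of_nat_CHAR[where 'a='a] assms by simp
  then have "z + z = 0" by (metis mult_2 mult_zero_left)
  then show ?thesis by (metis add.inverse_unique)
qed

theorem lemma6p10:
  fixes A :: "'a::field oct set"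
  assumes "alg_closed_field TYPE('a)"
    and "CHAR('a) = 2"
    and "oct_subalgebra A"
    and "\<not> A \<subseteq> oct0"
    and "oct.dim A \<ge> 2"
  shows "\<exists>g\<in>G2. {e1, u1} \<subseteq> g ` A \<or> {e1, v1} \<subseteq> g ` A \<or> {e1, e2} \<subseteq> g ` A"
proof -
  have neg: "\<And>z::'a. -z = z" using char2_neg assms(2) by blast
  have sub: "oct.subspace A" and mulA: "\<And>x y. x \<in> A \<Longrightarrow> y \<in> A \<Longrightarrow> oct_mult x y \<in> A"
    using assms(3) unfolding oct_subalgebra_def by auto
  obtain x where xA: "x \<in> A" and tx: "oct_tr x \<noteq> 0" using assms(4) unfolding oct0_def by blast
  obtain a0 u0 v0 b0 where xd: "x = (a0, u0, v0, b0)" by (cases x) auto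
  define c where "c = 1 / (a0 + b0)"
  define y where "y = oct_scale c x"
  have yA: "y \<in> A" unfolding y_def by (rule oct.subspace_scale[OF sub xA])
  define \<alpha> where "\<alpha> = c * a0"
  define \<beta> where "\<beta> = c * b0"
  define u where "u = vsc c u0"
  define v where "v = vsc c v0"
  have yd: "y = (\<alpha>, u, v, \<beta>)" by (simp add: y_def xd \<alpha>_def \<beta>_def u_def v_def)
  have "\<alpha> + \<beta> = c * (a0 + b0)" by (simp add: \<alpha>_def \<beta>_def distrib_left)
  then have ab: "\<alpha> + \<beta> = 1" using tx by (simp add: xd c_def)
  have ab': "\<alpha> - \<beta> = 1" using ab neg by (metis diff_conv_add_uminus)
  define \<gamma> where "\<gamma> = dot3 u v"
  obtain t where t: "1 + t - t * t * \<gamma> = 0"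
  proof (cases "\<gamma> = 0")
    case True then show ?thesis using that[of "-1"] by simp
  next
    case False
    have "degree [:1, 1, -\<gamma>:] > 0" using False by simp
    then obtain r where "poly [:1, 1, -\<gamma>:] r = 0" using assms(1) unfolding alg_closed_field_def by blast
    then show ?thesis using that[of r] by (simp add: algebra_simps)
  qed
  define a where "a = \<alpha> - t * \<gamma>"
  define b where "b = \<beta> + t * \<gamma>"
  have apb: "a + b = 1" using ab by (simp add: a_def b_def)
  have amb: "a - b = 1" using apb neg by (metis diff_conv_add_uminus)
  have bma: "b - a = 1" using apb neg by (metis diff_conv_add_uminus add.commute)
  define G where "G = psi (-v) \<circ> phi (vsc t u)"
  have GG: "G \<in> G2" unfolding G_def by (rule G2_comp[OF phi_G2 psi_G2])
  have "phi (vsc t u) y = (\<alpha> - t * \<gamma>, vsc (1 + (\<alpha> - \<beta>) * t - t * t * \<gamma>) u, v, \<beta> + t * \<gamma>)"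
    unfolding yd \<gamma>_def by (rule phi_special)
  also have "1 + (\<alpha> - \<beta>) * t - t * t * \<gamma> = 0" using t ab' by simp
  finally have "phi (vsc t u) y = (a, 0, v, b)" by (simp add: a_def b_def)
  then have "G y = psi (-v) (a, 0, v, b)" by (simp only: G_def o_apply)
  also have "\<dots> = (a, 0, v - vsc (a - b) v, b)" by (rule psi_special)
  finally have Gy: "G y = (a, 0, 0, b)" by (simp add: amb vsc_simps)
  have B: "oct_subalgebra (G ` A)" by (rule G2_subalg[OF GG assms(3)])
  have zB: "(a, 0, 0, b) \<in> G ` A" using Gy yA by (metis imageI)
  show ?thesis
  proof (cases "a = 0")
    case True
    then have "b = 1" using apb by simp
    have "(sig \<circ> G) y = e1" using True \<open>b = 1\<close> by (simp add: Gy e1_def)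
    then show ?thesis using finish[OF G2_comp[OF GG sig_G2] _ yA assms(3) assms(5)] by blast
  next
    case a0: False
    show ?thesis
    proof (cases "b = 0")
      case True
      then have "a = 1" using apb by simp
      have "G y = e1" using True \<open>a = 1\<close> by (simp add: Gy e1_def)
      then show ?thesis using finish[OF GG _ yA assms(3) assms(5)] by blast
    next
      case b0: False
      have sB: "oct.subspace (G ` A)" and mB: "\<And>x y. x \<in> G ` A \<Longrightarrow> y \<in> G ` A \<Longrightarrow> oct_mult x y \<in> G ` A"
        using B unfolding oct_subalgebra_def by auto
      have zz: "oct_mult (a, 0, 0, b) (a, 0, 0, b) = ((a * a, 0, 0, b * b) :: 'a oct)" by simp
      have zzB: "(a * a, 0, 0, b * b) \<in> G ` A" using mB[OF zB zB] zz by simp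
      have "oct_scale (1 / a) (oct_scale b (a, 0, 0, b) - (a * a, 0, 0, b * b)) \<in> G ` A"
        by (intro oct.subspace_scale[OF sB] oct.subspace_diff[OF sB] zzB zB)
      moreover have "oct_scale (1 / a) (oct_scale b (a, 0, 0, b) - (a * a, 0, 0, b * b)) = (e1 :: 'a oct)"
      proof -
        have "b * a - a * a = a" using bma by (metis left_diff_distrib mult_1_left)
        then show ?thesis using a0 by (simp add: e1_def zero_prod_def)
      qed
      moreover have "oct_scale (1 / b) (oct_scale a (a, 0, 0, b) - (a * a, 0, 0, b * b)) \<in> G ` A"
        by (intro oct.subspace_scale[OF sB] oct.subspace_diff[OF sB] zzB zB)
      moreover have "oct_scale (1 / b) (oct_scale a (a, 0, 0, b) - (a * a, 0, 0, b * b)) = (e2 :: 'a oct)"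
      proof -
        have "a * b - b * b = b" using amb by (metis left_diff_distrib mult_1_left)
        then show ?thesis using b0 by (simp add: e2_def zero_prod_def)
      qed
      ultimately have "{e1, e2} \<subseteq> G ` A" by auto
      then show ?thesis using GG by blast
    qed
  qed
qed

end
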